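(* Let $\mu$ be a $(C,\gamma)$-absolutely decaying measure on $\mathbb{R}$, let $K=\operatorname{supp}\mu$, and let $0<\alpha\le\frac14\left(\frac{1}{3C}\right)^{1/\gamma}$. Then for every bi-Lipschitz map $\varphi:\mathbb{R}\to\mathbb{R}$, every integer $b\ge2$ and every $c,y\in\mathbb{T}$, the set $\varphi\big(\pi^{-1}(E(f_{b,c},y))\big)$ is $\alpha$-winning on $K$.
   Context: $\mathbb{T}=\mathbb{R}/\mathbb{Z}$, $\pi:\mathbb{R}\to\mathbb{T}$ the projection. For $b\in\mathbb{Z}_{\ge2}$ and $c\in\mathbb{T}$, $f_{b,c}:\mathbb{T}\to\mathbb{T}$ is $x\mapsto bx+c$. For $f:\mathbb{T}\to\mathbb{T}$ and $y\in\mathbb{T}$, $E(f,y)=\{x\in\mathbb{T}: y\notin\overline{\{f^n(x):n\in\mathbb{N}\}}\}$. $B(x,\rho)$ denotes the closed ball. A locally finite Borel measure $\mu$ on $\mathbb{R}$ is $(C,\gamma)$-absolutely decaying if there is $\rho_0>0$ such that for all $0<\rho\le\rho_0$, $x\in\operatorname{supp}\mu$, $y\in\mathbb{R}$, $\varepsilon>0$: $\mu(B(x,\rho)\cap B(y,\varepsilon\rho))<C\varepsilon^\gamma\mu(B(x,\rho))$. A map $\varphi$ is bi-Lipschitz if there is $L\ge1$ with $L^{-1}\le|\varphi(x)-\varphi(y)|/|x-y|\le L$ for all $x\ne y$. Schmidt's game on a complete metric space $(X,d)$ with parameters $0<\alpha,\beta<1$ and target $S\subset X$: on $X\times\mathbb{R}_+$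 write $(x_2,\rho_2)\le_s(x_1,\rho_1)$ if $\rho_2+d(x_1,x_2)\le\rho_1$. Bob picks $\omega_1=(x_1,\rho_1)$; then Alice and Bob alternately pick $\omega_k'=(x_k',\rho_k')\le_s\omega_k$ with $\rho_k'=\alpha\rho_k$ and $\omega_{k+1}\le_s\omega_k'$ with $\rho_{k+1}=\beta\rho_k'$. The nested closed balls intersect in a point $x_\infty$; Alice wins if $x_\infty\in S$. $S$ is $\alpha$-winning if for every $\beta\in(0,1)$ Alice has a strategy winning against all plays of Bob. For closed $K\subset\mathbb{R}$, $S\subset\mathbb{R}$ is $\alpha$-winning on $K$ if $S\cap K$ is $\alpha$-winning for the game played on $K$ with the induced metric. *)

theory Defs
  imports "HOL-Analysis.Analysis"
begin

text \<open>The circle T = R/Z is modelled by the unit circle in the complex plane,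
  via the topological group isomorphism x + Z |-> exp(2 pi i x).
  Under it, pi x = cis (2 pi x) and f_{b,c}(z) = c * z^b.\<close>

definition torus :: "complex set" where
  "torus = sphere 0 1"

definition proj_T :: "real \<Rightarrow> complex" where
  "proj_T x = cis (2 * pi * x)"

definition f_bc :: "nat \<Rightarrow> complex \<Rightarrow> complex \<Rightarrow> complex" where
  "f_bc b c z = c * z ^ b"

definition E_set :: "(complex \<Rightarrow> complex) \<Rightarrow> complex \<Rightarrow> complex set" where
  "E_set f y = {x \<in> torus. y \<notin> closure {(f ^^ n) x | n. True}}"

definition support :: "real measure \<Rightarrow> real set" where
  "support \<mu> = {x. \<forall>r>0. emeasure \<mu> (ball x r) > 0}"

definition locally_finite_borel :: "real measure \<Rightarrow> bool" where
  "locally_finite_borel \<mu> \<longleftrightarrow> sets \<mu> = sets borel \<and>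
     (\<forall>x. \<exists>r>0. emeasure \<mu> (ball x r) < \<infinity>)"

definition absolutely_decaying :: "real \<Rightarrow> real \<Rightarrow> real measure \<Rightarrow> bool" where
  "absolutely_decaying C \<gamma> \<mu> \<longleftrightarrow> locally_finite_borel \<mu> \<and>
     (\<exists>\<rho>0>0. \<forall>\<rho> x y \<epsilon>. 0 < \<rho> \<and> \<rho> \<le> \<rho>0 \<and> x \<in> support \<mu> \<and> \<epsilon> > 0 \<longrightarrow>
        emeasure \<mu> (cball x \<rho> \<inter> cball y (\<epsilon> * \<rho>))
          < ennreal (C * \<epsilon> powr \<gamma>) * emeasure \<mu> (cball x \<rho>))"

definition bi_lipschitz :: "(real \<Rightarrow> real) \<Rightarrow> bool" where
  "bi_lipschitz \<phi> \<longleftrightarrow> (\<exists>L\<ge>1. \<forall>x y. x \<noteq> y \<longrightarrow>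
     inverse L \<le> \<bar>\<phi> x - \<phi> y\<bar> / \<bar>x - y\<bar> \<and> \<bar>\<phi> x - \<phi> y\<bar> / \<bar>x - y\<bar> \<le> L)"

text \<open>Schmidt's game on K (induced metric). A move is (centre, radius).\<close>
definition le_s :: "real \<times> real \<Rightarrow> real \<times> real \<Rightarrow> bool" where
  "le_s w2 w1 \<longleftrightarrow> snd w2 + dist (fst w1) (fst w2) \<le> snd w1"

text \<open>Alice's strategy F maps the list of Bob's moves [w_1,...,w_k] to her move w_k'.
  Bob's moves are a sequence w :: nat => real * real (index 0 = w_1).\<close>
definition alice_move :: "((real \<times> real) list \<Rightarrow> real \<times> real) \<Rightarrow> (nat \<Rightarrow> real \<times> real) \<Rightarrow> nat \<Rightarrow> real \<times> real" where
  "alice_move F w k = F (map w [0..<Suc k])"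

definition bob_legal :: "real set \<Rightarrow> real \<Rightarrow> ((real \<times> real) list \<Rightarrow> real \<times> real) \<Rightarrow> (nat \<Rightarrow> real \<times> real) \<Rightarrow> nat \<Rightarrow> bool" where
  "bob_legal K \<beta> F w k \<longleftrightarrow> fst (w k) \<in> K \<and>
     (if k = 0 then snd (w 0) > 0
      else snd (w k) = \<beta> * snd (alice_move F w (k - 1)) \<and> le_s (w k) (alice_move F w (k - 1)))"

definition alice_legal :: "real set \<Rightarrow> real \<Rightarrow> ((real \<times> real) list \<Rightarrow> real \<times> real) \<Rightarrow> (nat \<Rightarrow> real \<times> real) \<Rightarrow> nat \<Rightarrow> bool" where
  "alice_legal K \<alpha> F w k \<longleftrightarrow> fst (alice_move F w k) \<in> K \<and>
     snd (alice_move F w k) = \<alpha> * snd (w k) \<and> le_s (alice_move F w k) (w k)"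

definition alpha_winning_on :: "real set \<Rightarrow> real \<Rightarrow> real set \<Rightarrow> bool" where
  "alpha_winning_on K \<alpha> S \<longleftrightarrow>
     (\<forall>\<beta>. 0 < \<beta> \<and> \<beta> < 1 \<longrightarrow>
       (\<exists>F. \<forall>w. (\<forall>n. (\<forall>k\<le>n. bob_legal K \<beta> F w k) \<longrightarrow> alice_legal K \<alpha> F w n) \<and>
                ((\<forall>k. bob_legal K \<beta> F w k) \<longrightarrow>
                   (\<Inter>k. cball (fst (w k)) (snd (w k)) \<inter> K) \<subseteq> S)))"

end

theory Submission imports Defs begin

lemma torus_cis: assumes "z \<in> torus" shows "\<exists>u. z = cis (2*pi*u)"
proof -
  have n: "cmod z = 1" using assms by (simp add: torus_def)
  hence "z \<noteq> 0" by auto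
  hence "cis (Arg z) = z" using cis_Arg[of z] n by (simp add: sgn_div_norm)
  thus ?thesis by (intro exI[of _ "Arg z / (2*pi)"]) simp
qed

lemma support_null:
  assumes sets: "sets \<mu> = sets borel" and A: "A \<in> sets borel" and dis: "A \<inter> support \<mu> = {}"
  shows "emeasure \<mu> A = 0"
proof -
  define I where "I = {(q,r). q \<in> \<rat> \<and> r \<in> \<rat> \<and> emeasure \<mu> (ball q r) = 0}"
  have cI: "countable I"
    by (rule countable_subset[of _ "\<rat> \<times> \<rat>"]) (auto simp: I_def countable_rat)
  have N: "(\<Union>p\<in>I. ball (fst p) (snd p)) \<in> null_sets \<mu>"
  proof (rule null_sets_UN'[OF cI])
    fix p assume "p \<in> I"
    thus "ball (fst p) (snd p) \<in> null_sets \<mu>" using sets by (auto simp: I_def null_sets_def)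
  qed
  have sub: "A \<subseteq> (\<Union>p\<in>I. ball (fst p) (snd p))"
  proof
    fix a assume "a \<in> A"
    hence "a \<notin> support \<mu>" using dis by auto
    then obtain r where r: "r > 0" "\<not> emeasure \<mu> (ball a r) > 0" by (auto simp: support_def)
    hence r0: "emeasure \<mu> (ball a r) = 0" by (simp add: zero_less_iff_neq_zero)
    obtain q where q: "q \<in> \<rat>" "a < q" "q < a + r/4" using Rats_dense_in_real[of a "a + r/4"] r by auto
    obtain s where s: "s \<in> \<rat>" "r/4 < s" "s < r/2" using Rats_dense_in_real[of "r/4" "r/2"] r by auto
    have bs: "ball q s \<subseteq> ball a r" using q s by (auto simp: dist_real_def)
    have "emeasure \<mu> (ball q s) \<le> emeasure \<mu> (ball a r)"
      by (rule emeasure_mono[OF bs]) (simp add: sets)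
    hence "emeasure \<mu> (ball q s) = 0" using r0 by simp
    hence "(q,s) \<in> I" using q s by (simp add: I_def)
    moreover have "a \<in> ball q s" using q s by (simp add: dist_real_def)
    ultimately show "a \<in> (\<Union>p\<in>I. ball (fst p) (snd p))" by force
  qed
  show ?thesis using N sub A sets
    by (metis (no_types, lifting) null_sets_subset null_setsD1)
qed

lemma dodge:
  assumes sets: "sets \<mu> = sets borel"
    and decay: "\<forall>\<rho> x y \<epsilon>. 0 < \<rho> \<and> \<rho> \<le> r0 \<and> x \<in> support \<mu> \<and> \<epsilon> > 0 \<longrightarrow>
        emeasure \<mu> (cball x \<rho> \<inter> cball y (\<epsilon> * \<rho>))
          < ennreal (C * \<epsilon> powr \<gamma>) * emeasure \<mu> (cball x \<rho>)"
    and x: "x \<in> support \<mu>" and rho: "0 < \<rho>" "\<rho> \<le> 2 * r0" and al: "0 < \<alpha>"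
    and Cb: "C * (4*\<alpha>) powr \<gamma> \<le> 1"
  shows "\<exists>x'\<in>support \<mu>. \<bar>x - x'\<bar> \<le> \<rho>/2 \<and> 2*\<alpha>*\<rho> < \<bar>x' - z\<bar>"
proof (rule ccontr)
  assume no: "\<not> ?thesis"
  define B where "B = cball x (\<rho>/2)"
  define Z where "Z = cball z ((4*\<alpha>) * (\<rho>/2))"
  have lt: "emeasure \<mu> (B \<inter> Z) < ennreal (C * (4*\<alpha>) powr \<gamma>) * emeasure \<mu> B"
    using decay[rule_format, of "\<rho>/2" x "4*\<alpha>" z] x rho al unfolding B_def Z_def by auto
  also have "\<dots> \<le> 1 * emeasure \<mu> B"
    by (intro mult_right_mono) (use Cb in auto)
  finally have lt2: "emeasure \<mu> (B \<inter> Z) < emeasure \<mu> B" by simp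
  have mB: "B \<in> sets \<mu>" "Z \<in> sets \<mu>" unfolding B_def Z_def sets by auto
  have "(B - Z) \<inter> support \<mu> = {}"
  proof (rule ccontr)
    assume "(B - Z) \<inter> support \<mu> \<noteq> {}"
    then obtain u where u: "u \<in> B" "u \<notin> Z" "u \<in> support \<mu>" by auto
    have "\<bar>x - u\<bar> \<le> \<rho>/2" using u(1) by (simp add: B_def dist_real_def)
    moreover have "2*\<alpha>*\<rho> < \<bar>u - z\<bar>" using u(2) by (simp add: Z_def dist_real_def abs_minus_commute)
    ultimately show False using no u(3) by blast
  qed
  hence z0: "emeasure \<mu> (B - Z) = 0"
    by (intro support_null[OF sets]) (use mB sets in auto)
  have "emeasure \<mu> B \<le> emeasure \<mu> ((B \<inter> Z) \<union> (B - Z))" by (intro emeasure_mono) (use mB in auto)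
  also have "\<dots> \<le> emeasure \<mu> (B \<inter> Z) + emeasure \<mu> (B - Z)"
    by (intro emeasure_subadditive) (use mB in auto)
  finally show False using z0 lt2 by simp
qed

lemma C_gt_1:
  assumes decay: "\<forall>\<rho> x y \<epsilon>. 0 < \<rho> \<and> \<rho> \<le> r0 \<and> x \<in> support \<mu> \<and> \<epsilon> > 0 \<longrightarrow>
        emeasure \<mu> (cball x \<rho> \<inter> cball y (\<epsilon> * \<rho>))
          < ennreal (C * \<epsilon> powr \<gamma>) * emeasure \<mu> (cball x \<rho>)"
    and r0: "r0 > 0" and x: "x \<in> support \<mu>"
  shows "C > 1"
proof (rule ccontr)
  assume "\<not> C > 1"
  have "emeasure \<mu> (cball x r0) < ennreal C * emeasure \<mu> (cball x r0)"
    using decay[rule_format, of r0 x 1 x] r0 x by simp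
  also have "\<dots> \<le> 1 * emeasure \<mu> (cball x r0)"
    by (intro mult_right_mono) (use \<open>\<not> C > 1\<close> in auto)
  finally show False by simp
qed

lemma bilip_props:
  assumes "bi_lipschitz \<phi>"
  obtains L where "L \<ge> 1" "\<And>x y. \<bar>x - y\<bar> \<le> L * \<bar>\<phi> x - \<phi> y\<bar>"
    "\<And>x y. \<bar>\<phi> x - \<phi> y\<bar> \<le> L * \<bar>x - y\<bar>"
proof -
  obtain L where L: "L \<ge> 1" and H: "\<And>x y. x \<noteq> y \<Longrightarrow>
     inverse L \<le> \<bar>\<phi> x - \<phi> y\<bar> / \<bar>x - y\<bar> \<and> \<bar>\<phi> x - \<phi> y\<bar> / \<bar>x - y\<bar> \<le> L"
    using assms unfolding bi_lipschitz_def by blast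
  have 1: "\<bar>x - y\<bar> \<le> L * \<bar>\<phi> x - \<phi> y\<bar>" for x y
  proof (cases "x = y")
    case False
    hence p: "\<bar>x - y\<bar> > 0" by simp
    have "inverse L \<le> \<bar>\<phi> x - \<phi> y\<bar> / \<bar>x - y\<bar>" using H[OF False] by blast
    hence "inverse L * \<bar>x - y\<bar> \<le> \<bar>\<phi> x - \<phi> y\<bar>" using p by (simp add: pos_le_divide_eq)
    hence "L * (inverse L * \<bar>x - y\<bar>) \<le> L * \<bar>\<phi> x - \<phi> y\<bar>" using L by (intro mult_left_mono) auto
    moreover have "L * (inverse L * \<bar>x - y\<bar>) = \<bar>x - y\<bar>" using L by (simp add: mult.assoc[symmetric])
    ultimately show ?thesis by linarith
  qed simp
  have 2: "\<bar>\<phi> x - \<phi> y\<bar> \<le> L * \<bar>x - y\<bar>" for x y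
  proof (cases "x = y")
    case False
    hence p: "\<bar>x - y\<bar> > 0" by simp
    have "\<bar>\<phi> x - \<phi> y\<bar> / \<bar>x - y\<bar> \<le> L" using H[OF False] by blast
    thus ?thesis using p by (simp add: pos_divide_le_eq mult.commute)
  qed simp
  show ?thesis using L 1 2 that by blast
qed

lemma bilip_surj:
  fixes \<phi> :: "real \<Rightarrow> real"
  assumes L: "L \<ge> 1" and lo: "\<And>x y. \<bar>x - y\<bar> \<le> L * \<bar>\<phi> x - \<phi> y\<bar>"
    and up: "\<And>x y. \<bar>\<phi> x - \<phi> y\<bar> \<le> L * \<bar>x - y\<bar>"
  shows "surj \<phi>"
proof -
  have cont: "continuous_on S \<phi>" for S
    by (rule lipschitz_on_continuous_on[of L]) (rule lipschitz_onI, use up L in \<open>auto simp: dist_real_def\<close>)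
  have inj: "\<phi> u \<noteq> \<phi> v" if "u \<noteq> v" for u v
    using lo[of u v] that by auto
  have "v \<in> range \<phi>" for v
  proof -
    define r where "r = \<bar>v - \<phi> 0\<bar> + 1"
    define P where "P = L * r"
    have r: "r > 0" "\<bar>v - \<phi> 0\<bar> < r" by (auto simp: r_def)
    have P: "P > 0" using L r by (simp add: P_def)
    have bP: "r \<le> \<bar>\<phi> P - \<phi> 0\<bar>" using lo[of P 0] L P unfolding P_def
      by (smt (verit, best) mult_le_cancel_left_pos)
    have bM: "r \<le> \<bar>\<phi> (-P) - \<phi> 0\<bar>" using lo[of "-P" 0] L P unfolding P_def
      by (smt (verit, best) mult_le_cancel_left_pos)
    show ?thesis
    proof (cases "\<phi> P \<ge> \<phi> 0")
      case True
      hence a: "\<phi> P \<ge> \<phi> 0 + r" using bP by linarith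
      show ?thesis
      proof (cases "\<phi> (-P) \<le> \<phi> 0")
        case True
        hence "\<phi> (-P) \<le> \<phi> 0 - r" using bM by linarith
        then obtain x where "\<phi> x = v" using IVT'[of \<phi> "-P" v P] a r P cont by force
        thus ?thesis by (metis rangeI)
      next
        case False
        hence b: "\<phi> (-P) \<ge> \<phi> 0 + r" using bM by linarith
        obtain x1 where x1: "0 \<le> x1" "x1 \<le> P" "\<phi> x1 = \<phi> 0 + r/2"
          using IVT'[of \<phi> 0 "\<phi> 0 + r/2" P] a r P cont by force
        obtain x2 where x2: "-P \<le> x2" "x2 \<le> 0" "\<phi> x2 = \<phi> 0 + r/2"
          using IVT2'[of \<phi> 0 "\<phi> 0 + r/2" "-P"] b r P cont by force
        have "x1 \<noteq> 0" "x2 \<noteq> 0" using x1 x2 r by auto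
        hence "x1 \<noteq> x2" using x1 x2 by auto
        thus ?thesis using inj x1 x2 by metis
      qed
    next
      case False
      hence a: "\<phi> P \<le> \<phi> 0 - r" using bP by linarith
      show ?thesis
      proof (cases "\<phi> (-P) \<ge> \<phi> 0")
        case True
        hence "\<phi> (-P) \<ge> \<phi> 0 + r" using bM by linarith
        then obtain x where "\<phi> x = v" using IVT2'[of \<phi> P v "-P"] a r P cont by force
        thus ?thesis by (metis rangeI)
      next
        case False
        hence b: "\<phi> (-P) \<le> \<phi> 0 - r" using bM by linarith
        obtain x1 where x1: "0 \<le> x1" "x1 \<le> P" "\<phi> x1 = \<phi> 0 - r/2"
          using IVT2'[of \<phi> P "\<phi> 0 - r/2" 0] a r P cont by force
        obtain x2 where x2: "-P \<le> x2" "x2 \<le> 0" "\<phi> x2 = \<phi> 0 - r/2"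
          using IVT'[of \<phi> "-P" "\<phi> 0 - r/2" 0] b r P cont by force
        have "x1 \<noteq> 0" "x2 \<noteq> 0" using x1 x2 r by auto
        hence "x1 \<noteq> x2" using x1 x2 by auto
        thus ?thesis using inj x1 x2 by metis
      qed
    qed
  qed
  thus ?thesis by auto
qed

lemma frac_dist:
  fixes v :: real assumes "v \<notin> \<int>"
  shows "min (frac v) (1 - frac v) \<le> \<bar>v - of_int m\<bar>"
proof (cases "m \<le> \<lfloor>v\<rfloor>")
  case True
  hence "of_int m \<le> real_of_int \<lfloor>v\<rfloor>" by simp
  thus ?thesis by (simp add: frac_def)
next
  case False
  hence "of_int m \<ge> real_of_int \<lfloor>v\<rfloor> + 1" by simp
  moreover have "v < real_of_int \<lfloor>v\<rfloor> + 1" by linarith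
  ultimately show ?thesis by (simp add: frac_def)
qed

lemma eta_exists:
  fixes a :: real and b :: nat
  shows "\<exists>\<eta>>0. \<forall>j\<le>J. \<forall>m::int. (real b ^ j - 1) * a \<notin> \<int> \<longrightarrow> \<eta> \<le> \<bar>(real b ^ j - 1) * a - of_int m\<bar>"
proof -
  define g where "g j = (let v = (real b ^ j - 1) * a in if v \<in> \<int> then 1 else min (frac v) (1 - frac v))" for j
  have gp: "g j > 0" for j
    by (auto simp: g_def Let_def frac_lt_1 frac_gt_0_iff)
  define \<eta> where "\<eta> = Min (g ` {..J})"
  have "\<eta> > 0" unfolding \<eta>_def using gp by (subst Min_gr_iff) auto
  moreover have "\<eta> \<le> \<bar>(real b ^ j - 1) * a - of_int m\<bar>" if "j \<le> J" "(real b ^ j - 1) * a \<notin> \<int>" for j m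
  proof -
    have "\<eta> \<le> g j" unfolding \<eta>_def using that by (intro Min_le) auto
    also have "g j \<le> \<bar>(real b ^ j - 1) * a - of_int m\<bar>"
      using frac_dist[OF that(2)] that(2) by (simp add: g_def Let_def)
    finally show ?thesis .
  qed
  ultimately show ?thesis by blast
qed

lemma cis_far:
  fixes u \<delta> :: real
  assumes d: "0 < \<delta>" "\<delta> \<le> 1/2" and far: "\<And>m::int. \<delta> \<le> \<bar>u - of_int m\<bar>"
  shows "2 * (sin (pi * \<delta>))^2 \<le> cmod (cis (2*pi*u) - 1)"
proof -
  define m0 where "m0 = \<lfloor>u + 1/2\<rfloor>"
  define v where "v = u - of_int m0"
  have v: "-1/2 \<le> v" "v \<le> 1/2" unfolding v_def m0_def by linarith+
  have vd: "\<delta> \<le> \<bar>v\<bar>" using far[of m0] by (simp add: v_def)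
  have "cis (2*pi*u) = cis (2*pi * v) * cis (2 * pi * of_int m0)"
    by (simp add: cis_mult v_def algebra_simps)
  also have "cis (2 * pi * of_int m0) = 1" by (rule cis_multiple_2pi) simp
  finally have cu: "cis (2*pi*u) = cis (2*pi * v)" by simp
  have "\<bar>Re (cis (2*pi * v) - 1)\<bar> \<le> cmod (cis (2*pi * v) - 1)" by (rule abs_Re_le_cmod)
  moreover have "Re (cis (2*pi * v) - 1) = cos (2*(pi * v)) - 1" by (simp add: mult.assoc)
  moreover have "cos (2*(pi * v)) = 1 - 2 * (sin (pi * v))^2" by (rule cos_double_sin)
  ultimately have A: "2 * (sin (pi * v))^2 \<le> cmod (cis (2*pi * v) - 1)" by simp
  have s1: "(sin (pi * v))^2 = (sin (pi * \<bar>v\<bar>))^2"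
    by (cases "v \<ge> 0") (auto simp: abs_if)
  have "sin (pi*\<delta>) \<le> sin (pi * \<bar>v\<bar>)"
  proof (rule sin_monotone_2pi_le)
    have "0 \<le> pi * \<delta>" using d by simp
    moreover have "0 \<le> pi / 2" by simp
    ultimately show "- (pi / 2) \<le> pi * \<delta>" by linarith
    show "pi * \<delta> \<le> pi * \<bar>v\<bar>" using vd by (intro mult_left_mono) auto
    have "\<bar>v\<bar> \<le> 1/2" using v by auto
    hence "pi * \<bar>v\<bar> \<le> pi * (1/2)" by (intro mult_left_mono) auto
    thus "pi * \<bar>v\<bar> \<le> pi / 2" by simp
  qed
  moreover have "0 \<le> sin (pi*\<delta>)" by (rule sin_ge_zero) (use d in auto)
  ultimately have "(sin (pi*\<delta>))^2 \<le> (sin (pi * \<bar>v\<bar>))^2" by (intro power_mono) auto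
  thus ?thesis using A s1 cu by simp
qed

lemma orbit_formula:
  assumes b: "b \<ge> 2" and c: "c = cis (2*pi*c')"
  shows "(f_bc b c ^^ n) (cis (2*pi*t)) =
     cis (2*pi*(real b ^ n * (t + c'/(real b - 1)) - c'/(real b - 1)))"
proof (induction n)
  case 0 thus ?case by simp
next
  case (Suc n)
  define e where "e = c'/(real b - 1)"
  have b1: "real b - 1 \<noteq> 0" using b by simp
  have ce: "c' = (real b - 1) * e" using b1 by (simp add: e_def)
  have "(f_bc b c ^^ Suc n) (cis (2*pi*t)) = c * (cis (2*pi*(real b ^ n * (t + e) - e))) ^ b"
  proof -
    have "(f_bc b c ^^ Suc n) (cis (2*pi*t)) = f_bc b c ((f_bc b c ^^ n) (cis (2*pi*t)))" by simp
    also have "\<dots> = f_bc b c (cis (2*pi*(real b ^ n * (t + e) - e)))" using Suc by (simp add: e_def)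
    finally show ?thesis by (simp add: f_bc_def)
  qed
  also have "\<dots> = cis (2*pi*c' + real b * (2*pi*(real b ^ n * (t + e) - e)))"
    by (simp only: c Complex.DeMoivre cis_mult)
  also have "2*pi*c' + real b * (2*pi*(real b ^ n * (t + e) - e)) = 2*pi*(real b ^ Suc n * (t + e) - e)"
    unfolding ce by (simp add: algebra_simps)
  finally show ?case by (simp add: e_def)
qed

lemma cis_diff_norm: "cmod (cis a - cis b) = cmod (cis (a - b) - 1)"
proof -
  have "cis a - cis b = cis b * (cis (a - b) - 1)" by (simp add: cis_mult algebra_simps)
  thus ?thesis by (simp add: norm_mult)
qed

lemma uniq_aux:
  fixes a e lam M \<rho> L \<eta> :: real and b J n n' :: nat and m m' :: int
  assumes b: "b \<ge> 2" and lam: "0 < lam" and L: "L > 0" and \<eta>: "\<eta> > 0"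
    and \<eta>J: "\<forall>j\<le>J. \<forall>m::int. (real b ^ j - 1) * a \<notin> \<int> \<longrightarrow> \<eta> \<le> \<bar>(real b ^ j - 1) * a - of_int m\<bar>"
    and J: "1/lam \<le> real J" and M: "8*L/(lam * min \<eta> 1) \<le> M" and \<rho>: "\<rho> > 0"
    and D1: "1 \<le> M*\<rho>*real b^n" and D2: "M*lam*\<rho>*real b^n' < 1"
    and nn: "n \<le> n'"
    and close: "\<bar>((a + of_int m)/real b^n - e) - ((a + of_int m')/real b^n' - e)\<bar> \<le> 4*L*\<rho>"
  shows "(a + of_int m)/real b^n - e = (a + of_int m')/real b^n' - e"
proof -
  define j where "j = n' - n"
  have n': "n' = j + n" using nn by (simp add: j_def)
  have bpos: "real b ^ k > 0" for k using b by simp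
  have mn: "min \<eta> 1 > 0" using \<eta> by simp
  have Mpos: "M > 0"
  proof -
    have "0 < 8*L/(lam * min \<eta> 1)" using L lam mn by simp
    thus ?thesis using M by linarith
  qed
  have "M*lam*\<rho>*real b^n * real b ^ j < 1" using D2 by (simp add: n' power_add algebra_simps)
  also have "1 \<le> M*\<rho>*real b^n" by (rule D1)
  finally have "lam * real b ^ j * (M*\<rho>*real b^n) < 1 * (M*\<rho>*real b^n)" by (simp add: algebra_simps)
  hence "lam * real b ^ j < 1" using Mpos \<rho> bpos[of n] by (simp add: mult_less_cancel_right)
  hence "real b ^ j < 1/lam" using lam by (simp add: field_simps)
  hence bjJ: "real b ^ j < real J" using J by linarith
  have "j < 2^j" by (rule less_exp)
  also have "(2::nat)^j \<le> b^j" using b by (intro power_mono) auto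
  finally have "real j < real b ^ j" by (metis of_nat_less_iff of_nat_power)
  hence jJ: "j \<le> J" using bjJ by linarith
  define X where "X = real b ^ n' * (((a + of_int m)/real b^n - e) - ((a + of_int m')/real b^n' - e))"
  have X: "X = (real b ^ j - 1) * a + (real b ^ j * of_int m - of_int m')"
    unfolding X_def n' using bpos by (simp add: power_add field_simps)
  have "\<bar>X\<bar> \<le> real b ^ n' * (4*L*\<rho>)" unfolding X_def using close bpos[of n']
    by (simp add: abs_mult mult_left_mono)
  also have "\<dots> = 4*L * (real b ^ n' * \<rho>)" by simp
  also have "\<dots> < 4*L * (1/(M*lam))"
  proof -
    have "real b ^ n' * \<rho> * (M*lam) < 1" using D2 by (simp add: algebra_simps)
    hence "real b ^ n' * \<rho> < 1/(M*lam)" using Mpos lam by (simp add: field_simps)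
    thus ?thesis using L by (intro mult_strict_left_mono) auto
  qed
  also have "\<dots> \<le> min \<eta> 1 / 2"
  proof -
    define q where "q = min \<eta> 1"
    have q: "q > 0" using mn by (simp add: q_def)
    have "8*L \<le> M * (lam * q)" using M lam q by (simp add: q_def pos_divide_le_eq)
    hence "4*L \<le> q/2 * (M*lam)" by (simp add: algebra_simps)
    hence "4*L/(M*lam) \<le> q/2" using Mpos lam by (simp add: pos_divide_le_eq)
    thus ?thesis by (simp add: q_def)
  qed
  finally have Xs: "\<bar>X\<bar> < min \<eta> 1 / 2" .
  have X0: "X = 0"
  proof (cases "(real b ^ j - 1) * a \<in> \<int>")
    case False
    have "\<eta> \<le> \<bar>(real b ^ j - 1) * a - of_int (m' - int b ^ j * m)\<bar>"
      using \<eta>J jJ False by blast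
    also have "\<dots> = \<bar>X\<bar>" unfolding X by (simp add: algebra_simps)
    finally show ?thesis using Xs by linarith
  next
    case True
    then obtain i where i: "(real b ^ j - 1) * a = of_int i" by (metis Ints_cases)
    have Xi: "X = of_int (i + int b ^ j * m - m')" unfolding X i by simp
    moreover have "\<bar>X\<bar> < 1" using Xs by linarith
    ultimately have "\<bar>real_of_int (i + int b ^ j * m - m')\<bar> < 1" by simp
    hence "\<bar>i + int b ^ j * m - m'\<bar> < 1" by linarith
    hence "i + int b ^ j * m - m' = 0" by linarith
    thus ?thesis using Xi by simp
  qed
  thus ?thesis unfolding X_def using bpos[of n'] b by simp
qed

lemma uniq:
  fixes a e lam M \<rho> L \<eta> :: real and b J n n' :: nat and m m' :: int
  assumes b: "b \<ge> 2" and lam: "0 < lam" and L: "L > 0" and \<eta>: "\<eta> > 0"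
    and \<eta>J: "\<forall>j\<le>J. \<forall>m::int. (real b ^ j - 1) * a \<notin> \<int> \<longrightarrow> \<eta> \<le> \<bar>(real b ^ j - 1) * a - of_int m\<bar>"
    and J: "1/lam \<le> real J" and M: "8*L/(lam * min \<eta> 1) \<le> M" and \<rho>: "\<rho> > 0"
    and D1: "M*lam*\<rho>*real b^n < 1" "1 \<le> M*\<rho>*real b^n"
    and D2: "M*lam*\<rho>*real b^n' < 1" "1 \<le> M*\<rho>*real b^n'"
    and close: "\<bar>((a + of_int m)/real b^n - e) - ((a + of_int m')/real b^n' - e)\<bar> \<le> 4*L*\<rho>"
  shows "(a + of_int m)/real b^n - e = (a + of_int m')/real b^n' - e"
proof (cases "n \<le> n'")
  case True
  show ?thesis by (rule uniq_aux[OF b lam L \<eta> \<eta>J J M \<rho> D1(2) D2(1) True close])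
next
  case False
  have "(a + of_int m')/real b^n' - e = (a + of_int m)/real b^n - e"
    by (rule uniq_aux[OF b lam L \<eta> \<eta>J J M \<rho> D2(2) D1(1)]) (use False close in \<open>auto simp: abs_minus_commute\<close>)
  thus ?thesis by simp
qed

theorem corollary4p3:
  fixes \<mu> :: "real measure" and C \<gamma> \<alpha> :: real
  assumes "C > 0" and "\<gamma> > 0"
    and "absolutely_decaying C \<gamma> \<mu>"
    and "0 < \<alpha>" and "\<alpha> \<le> (1/4) * (1 / (3 * C)) powr (1 / \<gamma>)"
  shows "\<forall>\<phi> (b::nat) c y. bi_lipschitz \<phi> \<and> b \<ge> 2 \<and> c \<in> torus \<and> y \<in> torus \<longrightarrow>
           alpha_winning_on (support \<mu>) \<alpha> (\<phi> ` (proj_T -` E_set (f_bc b c) y))"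
proof (intro allI impI)
  fix \<phi> :: "real \<Rightarrow> real" and b :: nat and c y :: complex
  assume H: "bi_lipschitz \<phi> \<and> b \<ge> 2 \<and> c \<in> torus \<and> y \<in> torus"
  hence b: "b \<ge> 2" by simp
  obtain L where L1: "L \<ge> 1" and lo: "\<And>x y. \<bar>x - y\<bar> \<le> L * \<bar>\<phi> x - \<phi> y\<bar>"
    and up: "\<And>x y. \<bar>\<phi> x - \<phi> y\<bar> \<le> L * \<bar>x - y\<bar>"
    using bilip_props[of \<phi>] H by blast
  have surj\<phi>: "surj \<phi>" by (rule bilip_surj[OF L1 lo up])
  define \<psi> where "\<psi> = inv \<phi>"
  have \<phi>\<psi>: "\<phi> (\<psi> u) = u" for u using surj\<phi> by (simp add: \<psi>_def surj_f_inv_f)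
  have \<psi>lip: "\<bar>\<psi> u - \<psi> v\<bar> \<le> L * \<bar>u - v\<bar>" for u v using lo[of "\<psi> u" "\<psi> v"] by (simp add: \<phi>\<psi>)
  obtain c' where c: "c = cis (2*pi*c')" using torus_cis H by blast
  obtain y' where y: "y = cis (2*pi*y')" using torus_cis H by blast
  define e where "e = c'/(real b - 1)"
  define a where "a = e + y'"
  define bp where "bp n m = (a + of_int m)/real b ^ n - e" for n :: nat and m :: int
  obtain r0 where r0: "r0 > 0" and decay: "\<forall>\<rho> x y \<epsilon>. 0 < \<rho> \<and> \<rho> \<le> r0 \<and> x \<in> support \<mu> \<and> \<epsilon> > 0 \<longrightarrow>
        emeasure \<mu> (cball x \<rho> \<inter> cball y (\<epsilon> * \<rho>))
          < ennreal (C * \<epsilon> powr \<gamma>) * emeasure \<mu> (cball x \<rho>)"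
    using assms(3) unfolding absolutely_decaying_def by blast
  have sets: "sets \<mu> = sets borel" using assms(3) by (simp add: absolutely_decaying_def locally_finite_borel_def)
  have Cb: "C * (4*\<alpha>) powr \<gamma> \<le> 1"
  proof -
    have "4*\<alpha> \<le> (1/(3*C)) powr (1/\<gamma>)" using assms(5) by simp
    hence "(4*\<alpha>) powr \<gamma> \<le> ((1/(3*C)) powr (1/\<gamma>)) powr \<gamma>" using assms by (intro powr_mono2) auto
    also have "\<dots> = 1/(3*C)" using assms by (simp add: powr_powr)
    finally have "C * (4*\<alpha>) powr \<gamma> \<le> C * (1/(3*C))" using assms(1) by (intro mult_left_mono) auto
    thus ?thesis using assms(1) by simp
  qed
  have \<alpha>half: "\<alpha> \<le> 1/2" if "x \<in> support \<mu>" for x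
  proof -
    have C1: "C > 1" by (rule C_gt_1[OF decay r0 that])
    hence "1/(3*C) \<le> 1" by simp
    hence "(1/(3*C)) powr (1/\<gamma>) \<le> 1" using assms C1 by (intro powr_le1) auto
    thus ?thesis using assms(5) by simp
  qed
  show "alpha_winning_on (support \<mu>) \<alpha> (\<phi> ` (proj_T -` E_set (f_bc b c) y))"
    unfolding alpha_winning_on_def
  proof (intro allI impI)
    fix \<beta> :: real assume \<beta>: "0 < \<beta> \<and> \<beta> < 1"
    define lam where "lam = \<alpha> * \<beta>"
    have lam0: "0 < lam" using \<beta> assms(4) by (simp add: lam_def)
    define J where "J = nat \<lceil>1/lam\<rceil>"
    have J: "1/lam \<le> real J" unfolding J_def by linarith
    obtain \<eta> where \<eta>: "\<eta> > 0" and \<eta>J: "\<forall>j\<le>J. \<forall>m::int. (real b ^ j - 1) * a \<notin> \<int> \<longrightarrow> \<eta> \<le> \<bar>(real b ^ j - 1) * a - of_int m\<bar>"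
      using eta_exists[of J b a] by blast
    define Mb where "Mb = 8*L/(lam * min \<eta> 1)"
    define Mf where "Mf \<rho>s = max Mb (max (1/(lam * min r0 \<rho>s)) (1/\<rho>s))" for \<rho>s
    define D where "D M \<rho> n \<longleftrightarrow> M*lam*\<rho>*real b^n < 1 \<and> 1 \<le> M*\<rho>*real b^n" for M \<rho> and n :: nat
    define cnd where "cnd M x \<rho> nm \<longleftrightarrow> D M \<rho> (fst nm) \<and> \<bar>bp (fst nm) (snd nm) - \<psi> x\<bar> \<le> 2*L*\<rho>"
      for M x \<rho> and nm :: "nat \<times> int"
    define dod where "dod x \<rho> z = (SOME x'. x' \<in> support \<mu> \<and> \<bar>x - x'\<bar> \<le> \<rho>/2 \<and> 2*\<alpha>*\<rho> < \<bar>x' - z\<bar>)" for x \<rho> z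
    define F where "F ws = (let x = fst (last ws); \<rho> = snd (last ws); M = Mf (snd (hd ws)) in
        if \<exists>nm. cnd M x \<rho> nm
        then (dod x \<rho> (\<phi> (bp (fst (SOME nm. cnd M x \<rho> nm)) (snd (SOME nm. cnd M x \<rho> nm)))), \<alpha>*\<rho>)
        else (x, \<alpha>*\<rho>))" for ws
    have F_snd: "snd (F ws) = \<alpha> * snd (last ws)" for ws by (simp add: F_def Let_def)
    have F_good: "fst (F ws) \<in> support \<mu> \<and> le_s (F ws) (last ws) \<and>
        (\<forall>nm. cnd (Mf (snd (hd ws))) (fst (last ws)) (snd (last ws)) nm \<longrightarrow>
          (\<exists>nm'. cnd (Mf (snd (hd ws))) (fst (last ws)) (snd (last ws)) nm' \<and>
             2*\<alpha>* snd (last ws) < \<bar>fst (F ws) - \<phi> (bp (fst nm') (snd nm'))\<bar>))"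
      if xK: "fst (last ws) \<in> support \<mu>" and \<rho>p: "snd (last ws) > 0" and \<rho>sp: "snd (hd ws) > 0" for ws
    proof -
      define x where "x = fst (last ws)"
      define \<rho> where "\<rho> = snd (last ws)"
      define \<rho>s where "\<rho>s = snd (hd ws)"
      define M where "M = Mf \<rho>s"
      have ah: "\<alpha> \<le> 1/2" using \<alpha>half xK by blast
      show ?thesis
      proof (cases "\<exists>nm. cnd M x \<rho> nm")
        case True
        define nm where "nm = (SOME nm. cnd M x \<rho> nm)"
        have cn: "cnd M x \<rho> nm" unfolding nm_def using True by (rule someI_ex)
        define z where "z = \<phi> (bp (fst nm) (snd nm))"
        have Fws: "F ws = (dod x \<rho> z, \<alpha>*\<rho>)"
          using True unfolding F_def Let_def x_def \<rho>_def M_def \<rho>s_def z_def nm_def by simp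
        have mm: "min r0 \<rho>s > 0" using r0 \<rho>sp by (simp add: \<rho>s_def)
        have M1: "1/(lam * min r0 \<rho>s) \<le> M" by (simp add: M_def Mf_def)
        have "1 \<le> M * (lam * min r0 \<rho>s)" using M1 lam0 mm by (simp add: pos_divide_le_eq)
        have Dn: "M*lam*\<rho>*real b^(fst nm) < 1" using cn by (simp add: cnd_def D_def)
        have bn1: "1 \<le> real b ^ (fst nm)" using b by simp
        have "\<rho> \<le> \<rho> * real b ^ (fst nm)" using bn1 \<rho>p by (simp add: \<rho>_def)
        moreover have "M * lam > 0"
        proof -
          have "0 < 1/(lam * min r0 \<rho>s)" using lam0 mm by simp
          hence "M > 0" using M1 by linarith
          thus ?thesis using lam0 by simp
        qed
        ultimately have "M * lam * \<rho> \<le> M * lam * (\<rho> * real b ^ (fst nm))" by (intro mult_left_mono) auto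
        hence "M * lam * \<rho> < 1" using Dn by (simp add: mult.assoc)
        have \<rho>r0: "\<rho> \<le> 2 * r0"
        proof -
          have "(M * (lam * min r0 \<rho>s)) * \<rho> < min r0 \<rho>s"
          proof -
            have "M*lam*\<rho> * min r0 \<rho>s < 1 * min r0 \<rho>s" using \<open>M * lam * \<rho> < 1\<close> mm by (intro mult_strict_right_mono) auto
            thus ?thesis by (simp add: algebra_simps)
          qed
          moreover have "1 * \<rho> \<le> (M * (lam * min r0 \<rho>s)) * \<rho>" using \<open>1 \<le> M * (lam * min r0 \<rho>s)\<close> \<rho>p
            by (intro mult_right_mono) (auto simp: \<rho>_def)
          ultimately show ?thesis using r0 by linarith
        qed
        have ex: "\<exists>x'\<in>support \<mu>. \<bar>x - x'\<bar> \<le> \<rho>/2 \<and> 2*\<alpha>*\<rho> < \<bar>x' - z\<bar>"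
          by (rule dodge[OF sets decay]) (use xK \<rho>p \<rho>r0 assms(4) Cb in \<open>auto simp: x_def \<rho>_def\<close>)
        have dd: "dod x \<rho> z \<in> support \<mu> \<and> \<bar>x - dod x \<rho> z\<bar> \<le> \<rho>/2 \<and> 2*\<alpha>*\<rho> < \<bar>dod x \<rho> z - z\<bar>"
          unfolding dod_def by (rule someI_ex) (use ex in blast)
        have "\<alpha>*\<rho> \<le> (1/2)*\<rho>" using ah \<rho>p by (intro mult_right_mono) (auto simp: \<rho>_def)
        hence "le_s (F ws) (last ws)"
          unfolding le_s_def Fws using dd by (simp add: x_def \<rho>_def dist_real_def)
        moreover have "\<exists>nm'. cnd M x \<rho> nm' \<and> 2*\<alpha>*\<rho> < \<bar>fst (F ws) - \<phi> (bp (fst nm') (snd nm'))\<bar>"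
          using cn dd by (intro exI[of _ nm]) (simp add: Fws z_def)
        ultimately show ?thesis using dd Fws by (simp add: x_def \<rho>_def M_def \<rho>s_def)
      next
        case False
        have Fws: "F ws = (x, \<alpha>*\<rho>)"
          using False unfolding F_def Let_def x_def \<rho>_def M_def \<rho>s_def by simp
        have "\<alpha> * \<rho> \<le> \<rho>" using ah \<rho>p by (simp add: \<rho>_def)
        thus ?thesis using False xK Fws
          by (simp add: le_s_def x_def \<rho>_def M_def \<rho>s_def)
      qed
    qed
    show "\<exists>F. \<forall>w. (\<forall>n. (\<forall>k\<le>n. bob_legal (support \<mu>) \<beta> F w k) \<longrightarrow> alice_legal (support \<mu>) \<alpha> F w n) \<and>
                ((\<forall>k. bob_legal (support \<mu>) \<beta> F w k) \<longrightarrow>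
                   (\<Inter>k. cball (fst (w k)) (snd (w k)) \<inter> support \<mu>) \<subseteq> \<phi> ` (proj_T -` E_set (f_bc b c) y))"
    proof (rule exI[of _ F], rule allI, rule conjI)
      fix w :: "nat \<Rightarrow> real \<times> real"
      have am: "alice_move F w k = F (map w [0..<Suc k])" for k by (simp add: alice_move_def)
      have lst: "last (map w [0..<Suc k]) = w k" for k by simp
      have hdw: "hd (map w [0..<Suc k]) = w 0" for k by (simp only: upt_conv_Cons[OF zero_less_Suc]) simp
      have rad: "snd (w n) = snd (w 0) * lam ^ n \<and> snd (w 0) > 0"
        if "\<forall>k\<le>n. bob_legal (support \<mu>) \<beta> F w k" for n
        using that
      proof (induction n)
        case 0 thus ?case by (simp add: bob_legal_def)
      next
        case (Suc n)
        have "bob_legal (support \<mu>) \<beta> F w (Suc n)" using Suc.prems by blast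
        hence "snd (w (Suc n)) = \<beta> * snd (alice_move F w n)" by (simp add: bob_legal_def)
        also have "\<dots> = \<beta> * (\<alpha> * snd (w n))" by (simp add: am F_snd)
        finally show ?case using Suc.IH Suc.prems by (simp add: lam_def)
      qed
      show "\<forall>n. (\<forall>k\<le>n. bob_legal (support \<mu>) \<beta> F w k) \<longrightarrow> alice_legal (support \<mu>) \<alpha> F w n"
      proof (intro allI impI)
        fix n assume bl: "\<forall>k\<le>n. bob_legal (support \<mu>) \<beta> F w k"
        have xK: "fst (w n) \<in> support \<mu>" using bl by (simp add: bob_legal_def)
        have r: "snd (w n) = snd (w 0) * lam ^ n" "snd (w 0) > 0" using rad[OF bl] by auto
        have "snd (w n) > 0" using r lam0 by simp
        hence "fst (F (map w [0..<Suc n])) \<in> support \<mu> \<and> le_s (F (map w [0..<Suc n])) (w n)"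
          using F_good[of "map w [0..<Suc n]", unfolded lst hdw, OF xK _ r(2)] by blast
        thus "alice_legal (support \<mu>) \<alpha> F w n"
          by (simp add: alice_legal_def am F_snd)
      qed
      show "(\<forall>k. bob_legal (support \<mu>) \<beta> F w k) \<longrightarrow>
              (\<Inter>k. cball (fst (w k)) (snd (w k)) \<inter> support \<mu>) \<subseteq> \<phi> ` (proj_T -` E_set (f_bc b c) y)"
      proof (intro impI subsetI)
        fix z assume allb: "\<forall>k. bob_legal (support \<mu>) \<beta> F w k"
          and zI: "z \<in> (\<Inter>k. cball (fst (w k)) (snd (w k)) \<inter> support \<mu>)"
        define \<rho>s where "\<rho>s = snd (w 0)"
        define M where "M = Mf \<rho>s"
        have rk: "snd (w k) = \<rho>s * lam ^ k" for k using rad[of k] allb by (simp add: \<rho>s_def)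
        have \<rho>s: "\<rho>s > 0" using rad[of 0] allb by (simp add: \<rho>s_def)
        have zK: "z \<in> support \<mu>" using zI by auto
        have ah: "\<alpha> \<le> 1/2" using \<alpha>half zK by blast
        have lam1: "lam < 1"
        proof -
          have "\<alpha> * \<beta> < 1 * 1" using ah \<beta> assms(4) by (intro mult_strict_mono) auto
          thus ?thesis by (simp add: lam_def)
        qed
        have zx: "\<bar>z - fst (w k)\<bar> \<le> \<rho>s * lam ^ k" for k
        proof -
          have "\<forall>x. \<bar>z - fst (w x)\<bar> \<le> snd (w x)" using zI by (auto simp: dist_real_def abs_minus_commute)
          thus ?thesis using rk[of k] by metis
        qed
        have zA: "\<bar>z - fst (alice_move F w k)\<bar> \<le> \<alpha> * (\<rho>s * lam ^ k)" for k
        proof -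
          have "le_s (w (Suc k)) (alice_move F w k)" using allb[rule_format, of "Suc k"] by (simp add: bob_legal_def)
          hence "snd (w (Suc k)) + \<bar>fst (alice_move F w k) - fst (w (Suc k))\<bar> \<le> snd (alice_move F w k)"
            by (simp add: le_s_def dist_real_def)
          moreover have "snd (alice_move F w k) = \<alpha> * (\<rho>s * lam ^ k)" by (simp add: am F_snd rk)
          moreover have "\<bar>z - fst (w (Suc k))\<bar> \<le> snd (w (Suc k))" using zx[of "Suc k"] rk[of "Suc k"] by simp
          ultimately show ?thesis by linarith
        qed
        have Mge: "Mb \<le> M" "1/(lam * min r0 \<rho>s) \<le> M" "1/\<rho>s \<le> M" by (auto simp: M_def Mf_def)
        have Mbpos: "Mb > 0" using L1 lam0 \<eta> by (simp add: Mb_def)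
        have Mpos: "M > 0" using Mge Mbpos by linarith
        define t where "t = \<psi> z"
        have \<phi>t: "\<phi> t = z" by (simp add: t_def \<phi>\<psi>)
        have key: "\<alpha>/(L*M) \<le> real b ^ n * \<bar>t - bp n m\<bar>" for n m
        proof -
          define P where "P k \<longleftrightarrow> M*lam*(\<rho>s*lam^k)*real b^n < 1" for k
          have "\<exists>k. lam ^ k < 1/(M*lam*\<rho>s*real b^n)"
            by (rule real_arch_pow_inv) (use Mpos lam0 \<rho>s b lam1 in auto)
          then obtain k0 where "lam ^ k0 < 1/(M*lam*\<rho>s*real b^n)" by blast
          hence "P k0" using Mpos lam0 \<rho>s b by (simp add: P_def field_simps)
          define k where "k = (LEAST k. P k)"
          have Pk: "P k" unfolding k_def by (rule LeastI) fact
          have Dk2: "1 \<le> M*(\<rho>s*lam^k)*real b^n"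
          proof (cases k)
            case 0
            have "1 \<le> M * \<rho>s" using Mge(3) \<rho>s by (simp add: pos_divide_le_eq)
            also have "\<dots> \<le> M * \<rho>s * real b ^ n" using Mpos \<rho>s b by simp
            finally show ?thesis using 0 by simp
          next
            case (Suc k')
            have "\<not> P k'" using Suc unfolding k_def by (metis lessI not_less_Least)
            thus ?thesis using Suc by (simp add: P_def algebra_simps)
          qed
          define \<rho> where "\<rho> = \<rho>s*lam^k"
          have \<rho>p: "\<rho> > 0" using \<rho>s lam0 by (simp add: \<rho>_def)
          have Dk: "D M \<rho> n" using Pk Dk2 by (simp add: D_def P_def \<rho>_def)
          define xk where "xk = fst (w k)"
          have xkK: "xk \<in> support \<mu>" using allb by (simp add: bob_legal_def xk_def)
          have bnd: "\<alpha>*\<rho>/L < \<bar>t - bp n m\<bar>"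
          proof (cases "\<bar>bp n m - \<psi> xk\<bar> \<le> 2*L*\<rho>")
            case True
            hence cn: "cnd M xk \<rho> (n,m)" using Dk by (simp add: cnd_def)
            have Fg: "\<exists>nm'. cnd M xk \<rho> nm' \<and> 2*\<alpha>*\<rho> < \<bar>fst (alice_move F w k) - \<phi> (bp (fst nm') (snd nm'))\<bar>"
            proof -
              have a1: "fst (w k) \<in> support \<mu>" using xkK by (simp add: xk_def)
              have a2: "snd (w k) > 0" using \<rho>p by (simp add: rk \<rho>_def)
              have a3: "snd (w 0) > 0" using \<rho>s by (simp add: \<rho>s_def)
              note G = F_good[of "map w [0..<Suc k]", unfolded lst hdw, OF a1 a2 a3]
              have e1: "Mf (snd (w 0)) = M" by (simp add: M_def \<rho>s_def)
              have e2: "snd (w k) = \<rho>" by (simp add: rk \<rho>_def)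
              have e3: "fst (w k) = xk" by (simp add: xk_def)
              have "cnd (Mf (snd (w 0))) (fst (w k)) (snd (w k)) (n,m)" unfolding e1 e2 e3 by (rule cn)
              hence "\<exists>nm'. cnd (Mf (snd (w 0))) (fst (w k)) (snd (w k)) nm' \<and>
                 2*\<alpha>* snd (w k) < \<bar>fst (F (map w [0..<Suc k])) - \<phi> (bp (fst nm') (snd nm'))\<bar>"
                using G by blast
              thus ?thesis unfolding e1 e2 e3 am .
            qed
            then obtain n' m' where cn': "cnd M xk \<rho> (n',m')"
              and far: "2*\<alpha>*\<rho> < \<bar>fst (alice_move F w k) - \<phi> (bp n' m')\<bar>" by auto
            have eq: "bp n m = bp n' m'"
              unfolding bp_def
            proof (rule uniq[OF b lam0 _ \<eta> \<eta>J J _ \<rho>p])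
              show "0 < L" using L1 by simp
              show "8 * L / (lam * min \<eta> 1) \<le> M" using Mge by (simp add: Mb_def)
              show "M * lam * \<rho> * real b ^ n < 1" "1 \<le> M * \<rho> * real b ^ n" using Dk by (auto simp: D_def)
              show "M * lam * \<rho> * real b ^ n' < 1" "1 \<le> M * \<rho> * real b ^ n'" using cn' by (auto simp: D_def cnd_def)
              have "\<bar>bp n' m' - \<psi> xk\<bar> \<le> 2*L*\<rho>" using cn' by (simp add: cnd_def)
              thus "\<bar>(a + real_of_int m) / real b ^ n - e - ((a + real_of_int m') / real b ^ n' - e)\<bar> \<le> 4 * L * \<rho>"
                using True unfolding bp_def by linarith
            qed
            have "\<bar>z - fst (alice_move F w k)\<bar> \<le> \<alpha> * \<rho>" using zA[of k] by (simp add: \<rho>_def)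
            hence "\<alpha> * \<rho> < \<bar>z - \<phi> (bp n m)\<bar>" using far unfolding eq by linarith
            also have "\<dots> \<le> L * \<bar>t - bp n m\<bar>" using up[of t "bp n m"] by (simp add: \<phi>t)
            finally show ?thesis using L1 by (simp add: pos_divide_less_eq mult.commute)
          next
            case False
            have "\<bar>t - \<psi> xk\<bar> \<le> L * \<bar>z - xk\<bar>" unfolding t_def by (rule \<psi>lip)
            also have "\<dots> \<le> L * \<rho>" using zx[of k] L1 by (intro mult_left_mono) (auto simp: xk_def \<rho>_def)
            finally have "L * \<rho> < \<bar>t - bp n m\<bar>" using False by linarith
            moreover have "\<alpha>*\<rho>/L \<le> L * \<rho>"
            proof -
              have "\<alpha> * \<rho> \<le> 1 * \<rho>" using ah \<rho>p by (intro mult_right_mono) auto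
              also have "\<dots> \<le> (L * L) * \<rho>" using L1 \<rho>p by (intro mult_right_mono) (use mult_mono[of 1 L 1 L] in auto)
              finally show ?thesis using L1 by (simp add: pos_divide_le_eq algebra_simps)
            qed
            ultimately show ?thesis by linarith
          qed
          have "1/M \<le> \<rho> * real b ^ n" using Dk2 Mpos by (simp add: \<rho>_def pos_divide_le_eq algebra_simps)
          hence "\<alpha> * (1/M) \<le> \<alpha>*(\<rho> * real b ^ n)" using assms(4) by (intro mult_left_mono) auto
          hence "\<alpha> * (1/M) / L \<le> \<alpha>*(\<rho> * real b ^ n) / L" using L1 by (intro divide_right_mono) auto
          hence "\<alpha>/(L*M) \<le> \<alpha>*(\<rho> * real b ^ n)/L" by (simp add: mult.commute)
          also have "\<dots> = real b ^ n * (\<alpha>*\<rho>/L)" by simp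
          also have "\<dots> \<le> real b ^ n * \<bar>t - bp n m\<bar>" using bnd b by (intro mult_left_mono) auto
          finally show ?thesis .
        qed
        show "z \<in> \<phi> ` (proj_T -` E_set (f_bc b c) y)"
        proof -
          define \<delta> where "\<delta> = min (\<alpha>/(L*M)) (1/2)"
          have d1: "0 < \<alpha>/(L*M)" using assms(4) L1 Mpos by simp
          have dd1: "0 < \<delta>" unfolding \<delta>_def using d1 by simp
          have dd2: "\<delta> \<le> 1/2" using min.cobounded2[of "\<alpha>/(L*M)" "1/2"] by (simp only: \<delta>_def)
          note \<delta> = dd1 dd2
          define r where "r = 2 * (sin (pi * \<delta>))^2"
          have rp: "r > 0"
          proof -
            have "sin (pi * \<delta>) > 0" by (rule sin_gt_zero) (use \<delta> in auto)
            thus ?thesis by (simp add: r_def)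
          qed
          have orb: "(f_bc b c ^^ n) (proj_T t) = cis (2*pi*(real b ^ n * (t + e) - e))" for n
            unfolding proj_T_def e_def by (rule orbit_formula[OF b c])
          have farn: "r \<le> cmod ((f_bc b c ^^ n) (proj_T t) - y)" for n
          proof -
            have "\<delta> \<le> \<bar>(real b ^ n * (t + e) - e - y') - of_int m\<bar>" for m
            proof -
              have "real b ^ n * (t + e) - e - y' - of_int m = real b ^ n * (t - bp n m)"
                using b by (simp add: bp_def a_def field_simps)
              hence "\<bar>(real b ^ n * (t + e) - e - y') - of_int m\<bar> = real b ^ n * \<bar>t - bp n m\<bar>"
                by (simp add: abs_mult)
              thus ?thesis using key[of n m] by (simp add: \<delta>_def)
            qed
            hence "r \<le> cmod (cis (2*pi*(real b ^ n * (t + e) - e - y')) - 1)"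
              unfolding r_def using cis_far[OF \<delta>] by blast
            also have "\<dots> = cmod (cis (2*pi*(real b ^ n * (t + e) - e)) - cis (2*pi*y'))"
              using cis_diff_norm[of "2*pi*(real b ^ n * (t + e) - e)" "2*pi*y'"] by (simp add: algebra_simps)
            finally show ?thesis by (simp add: orb y)
          qed
          have "{(f_bc b c ^^ n) (proj_T t) |n. True} \<subseteq> - ball y r"
            using farn by (auto simp: dist_norm norm_minus_commute) (metis not_le)
          hence "closure {(f_bc b c ^^ n) (proj_T t) |n. True} \<subseteq> - ball y r"
            by (rule closure_minimal) auto
          moreover have "y \<in> ball y r" using rp by simp
          ultimately have "y \<notin> closure {(f_bc b c ^^ n) (proj_T t) |n. True}" by blast
          moreover have "proj_T t \<in> torus" by (simp add: proj_T_def torus_def)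
          ultimately have "proj_T t \<in> E_set (f_bc b c) y" by (simp add: E_set_def)
          thus ?thesis using \<phi>t by blast
        qed
      qed
    qed
  qed
qed

end
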